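(* $\frac{n^2}{6}+O(n)\le\mathrm{sat}_\circlearrowright(n,D_1)\le\frac{n^2}{4}+O(n)$.
   Context: $\Omega_n=\{v_0,\dots,v_{n-1}\}$ with cyclic order $v_0<\dots<v_{n-1}<v_0$ (indices mod $n$). A $3$-cgh on $\Omega_n$ is a family of $3$-subsets of $\Omega_n$. For a $3$-cgh $F$, $H$ contains a copy of $F$ if there is an injection of the vertex set of $F$ into $\Omega_n$ preserving the cyclic order and mapping every edge of $F$ to an edge of $H$. $H$ is $F$-saturated if it contains no copy of $F$ but $H\cup\{e\}$ does for every $e\in\binom{\Omega_n}{3}\setminus H$; $\mathrm{sat}_\circlearrowright(n,F)$ is the minimum number of edges of an $F$-saturated $3$-cgh on $\Omega_n$. $D_1$ is the $3$-cgh on $\Omega_4$ with edges $\{v_0,v_1,v_2\}$ and $\{v_0,v_2,v_3\}$ (two triples sharing a pair whose remaining vertices lie on opposite sides of the chord through the shared pair). *)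

theory Defs
  imports Complex_Main
begin

text \<open>Vertices of Omega_n are the naturals 0..n-1 (v_i = i), with the cyclic order
  0 < 1 < ... < n-1 < 0.  cyc x y z means x, y, z appear in this cyclic order.\<close>

definition cyc :: "nat \<Rightarrow> nat \<Rightarrow> nat \<Rightarrow> bool" where
  "cyc x y z \<longleftrightarrow> (x < y \<and> y < z) \<or> (y < z \<and> z < x) \<or> (z < x \<and> x < y)"

definition triples :: "nat \<Rightarrow> nat set set" where
  "triples n = {e. e \<subseteq> {..<n} \<and> card e = 3}"

definition cgh3 :: "nat \<Rightarrow> nat set set \<Rightarrow> bool" where
  "cgh3 n H \<longleftrightarrow> H \<subseteq> triples n"

definition contains_copy :: "nat \<Rightarrow> nat set set \<Rightarrow> nat \<Rightarrow> nat set set \<Rightarrow> bool" where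
  "contains_copy n H k F \<longleftrightarrow> (\<exists>\<phi>. inj_on \<phi> {..<k} \<and> \<phi> ` {..<k} \<subseteq> {..<n} \<and>
     (\<forall>a<k. \<forall>b<k. \<forall>c<k. cyc a b c \<longrightarrow> cyc (\<phi> a) (\<phi> b) (\<phi> c)) \<and>
     (\<forall>e\<in>F. \<phi> ` e \<in> H))"

definition saturated :: "nat \<Rightarrow> nat \<Rightarrow> nat set set \<Rightarrow> nat set set \<Rightarrow> bool" where
  "saturated n k F H \<longleftrightarrow> cgh3 n H \<and> \<not> contains_copy n H k F \<and>
     (\<forall>e \<in> triples n - H. contains_copy n (insert e H) k F)"

definition sat_cyc :: "nat \<Rightarrow> nat \<Rightarrow> nat set set \<Rightarrow> nat" where
  "sat_cyc n k F = Min {card H | H. saturated n k F H}"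

definition D1 :: "nat set set" where
  "D1 = {{0,1,2}, {0,2,3}}"

end

theory Submission
  imports Defs
begin


lemma all_less4: "(\<forall>i<(4::nat). P i) \<longleftrightarrow> P 0 \<and> P 1 \<and> P 2 \<and> P 3"
  by (auto simp: less_Suc_eq numeral_eq_Suc)

lemma cyc_distinct: "cyc a b c \<Longrightarrow> a \<noteq> b \<and> b \<noteq> c \<and> a \<noteq> c"
  unfolding cyc_def by auto

lemma decode:
  assumes "contains_copy n G 4 D1"
  shows "\<exists>a b c d. {a,b,c} \<in> G \<and> {a,c,d} \<in> G \<and> cyc a b c \<and> cyc c d a"
proof -
  obtain \<phi> where inj: "inj_on \<phi> {..<4}" and cy: "\<forall>a<4. \<forall>b<4. \<forall>c<4. cyc a b c \<longrightarrow> cyc (\<phi> a) (\<phi> b) (\<phi> c)"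
    and ed: "\<forall>e\<in>D1. \<phi> ` e \<in> G" using assms unfolding contains_copy_def by blast
  have "cyc (\<phi> 0) (\<phi> 1) (\<phi> 2)" using cy by (auto simp: cyc_def)
  moreover have "cyc (\<phi> 2) (\<phi> 3) (\<phi> 0)" using cy by (auto simp: cyc_def)
  moreover have "{\<phi> 0, \<phi> 1, \<phi> 2} \<in> G" using ed by (auto simp: D1_def)
  moreover have "{\<phi> 0, \<phi> 2, \<phi> 3} \<in> G" using ed by (auto simp: D1_def)
  ultimately show ?thesis by blast
qed

lemma encode:
  assumes "a < n" "b < n" "c < n" "d < n" "cyc a b c" "cyc c d a" "{a,b,c} \<in> G" "{a,c,d} \<in> G"
  shows "contains_copy n G 4 D1"
proof -
  define \<phi> where "\<phi> = (\<lambda>i::nat. if i = 0 then a else if i = 1 then b else if i = 2 then c else d)"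
  have d: "a \<noteq> b" "b \<noteq> c" "a \<noteq> c" "c \<noteq> d" "a \<noteq> d" "b \<noteq> d"
    using assms(5,6) unfolding cyc_def by auto
  have "inj_on \<phi> {..<4}"
    unfolding inj_on_def \<phi>_def using d by (auto simp: less_Suc_eq numeral_eq_Suc)
  moreover have "\<phi> ` {..<4} \<subseteq> {..<n}"
    unfolding \<phi>_def using assms(1-4) by (auto simp: less_Suc_eq numeral_eq_Suc)
  moreover have "\<forall>x<4. \<forall>y<4. \<forall>z<4. cyc x y z \<longrightarrow> cyc (\<phi> x) (\<phi> y) (\<phi> z)"
    unfolding all_less4 \<phi>_def using assms(5,6) by (simp add: cyc_def; arith)
  moreover have "\<forall>e\<in>D1. \<phi> ` e \<in> G"
    unfolding D1_def \<phi>_def using assms(7,8) by (auto simp: insert_commute)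
  ultimately show ?thesis unfolding contains_copy_def by blast
qed


lemma edge_lt: "cgh3 n H \<Longrightarrow> e \<in> H \<Longrightarrow> x \<in> e \<Longrightarrow> x < n"
  unfolding cgh3_def triples_def by auto

lemma nocross:
  assumes "saturated n 4 D1 H" "{u,v,t} \<in> H" "{u,v,w} \<in> H" "cyc u t v" "cyc v w u"
  shows False
proof -
  have c: "cgh3 n H" and nc: "\<not> contains_copy n H 4 D1" using assms(1) unfolding saturated_def by auto
  have "u < n" "v < n" "t < n" "w < n" using edge_lt[OF c assms(2)] edge_lt[OF c assms(3)] by auto
  moreover have "{u,t,v} \<in> H" using assms(2) by (simp add: insert_commute)
  ultimately have "contains_copy n H 4 D1" using encode[of u n t v w H] assms(3,4,5) by blast
  with nc show False by simp
qed

lemma kill: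
  assumes "saturated n 4 D1 H" "T \<in> triples n" "T \<notin> H"
  shows "\<exists>u v t w. {u,v,t} = T \<and> {u,v,w} \<in> H \<and> cyc u t v \<and> cyc v w u"
proof -
  have c: "cgh3 n H" and nc: "\<not> contains_copy n H 4 D1"
    and s: "contains_copy n (insert T H) 4 D1" using assms unfolding saturated_def by auto
  obtain a b c d where e1: "{a,b,c} \<in> insert T H" and e2: "{a,c,d} \<in> insert T H"
    and c1: "cyc a b c" and c2: "cyc c d a" using decode[OF s] by blast
  have bd: "b \<noteq> d" using c1 c2 unfolding cyc_def by auto
  have dd: "a \<noteq> b" "b \<noteq> c" "a \<noteq> c" "c \<noteq> d" "a \<noteq> d" using c1 c2 unfolding cyc_def by auto
  have ne: "{a,b,c} \<noteq> {a,c,d}" using bd dd by (auto simp: insert_eq_iff doubleton_eq_iff)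
  show ?thesis
  proof (cases "{a,b,c} = T")
    case True
    then have "{a,c,d} \<in> H" using e2 ne by auto
    moreover have "{a,c,b} = T" using True by (simp add: insert_commute)
    ultimately show ?thesis using c1 c2 by blast
  next
    case False
    then have h1: "{a,b,c} \<in> H" using e1 by auto
    show ?thesis
    proof (cases "{a,c,d} = T")
      case True
      have "{c,a,d} = T" using True by (simp add: insert_commute)
      moreover have "{c,a,b} \<in> H" using h1 by (simp add: insert_commute)
      ultimately show ?thesis using c1 c2 by blast
    next
      case False
      then have "{a,c,d} \<in> H" using e2 by auto
      have "a < n" "b < n" "c < n" "d < n" using edge_lt[OF c h1] edge_lt[OF c \<open>{a,c,d} \<in> H\<close>] by auto
      then have "contains_copy n H 4 D1" using encode h1 \<open>{a,c,d} \<in> H\<close> c1 c2 by blast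
      with nc show ?thesis by simp
    qed
  qed
qed


definition cov :: "nat set set \<Rightarrow> nat \<Rightarrow> nat \<Rightarrow> bool" where
  "cov H x y \<longleftrightarrow> (\<exists>e\<in>H. x \<in> e \<and> y \<in> e)"

lemma triple_in: "x < n \<Longrightarrow> y < n \<Longrightarrow> z < n \<Longrightarrow> x \<noteq> y \<Longrightarrow> y \<noteq> z \<Longrightarrow> x \<noteq> z \<Longrightarrow> {x,y,z} \<in> triples n"
  unfolding triples_def by auto

lemma kill3:
  assumes "saturated n 4 D1 H" "x < n" "y < n" "z < n" "x \<noteq> y" "y \<noteq> z" "x \<noteq> z" "\<not> cov H x y"
  shows "\<exists>w. ({y,z,w} \<in> H \<and> ((cyc y x z \<and> cyc z w y) \<or> (cyc z x y \<and> cyc y w z)))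
           \<or> ({x,z,w} \<in> H \<and> ((cyc x y z \<and> cyc z w x) \<or> (cyc z y x \<and> cyc x w z)))"
proof -
  have "{x,y,z} \<notin> H" using assms(8) unfolding cov_def by auto
  then obtain u v t w where eq: "{u,v,t} = {x,y,z}" and h: "{u,v,w} \<in> H" and c1: "cyc u t v" and c2: "cyc v w u"
    using kill[OF assms(1) triple_in[OF assms(2-7)]] by blast
  have d: "u \<noteq> v" "u \<noteq> t" "v \<noteq> t" using c1 unfolding cyc_def by auto
  have m: "u \<in> {x,y,z}" "v \<in> {x,y,z}" "t \<in> {x,y,z}" using eq by blast+
  have nxy: "\<not> ({u,v} = {x,y})" using assms(8) h unfolding cov_def by auto
  have "(u = y \<and> v = z \<and> t = x) \<or> (u = z \<and> v = y \<and> t = x) \<or> (u = x \<and> v = z \<and> t = y) \<or> (u = z \<and> v = x \<and> t = y)"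
    using m d nxy by (auto simp: doubleton_eq_iff)
  then show ?thesis using h c1 c2 by (auto simp: insert_commute)
qed

lemma core:
  assumes sat: "saturated n 4 D1 H" and x: "x < n" and n1: "\<not> cov H x u" and n2: "\<not> cov H x v" and a4: "cyc u x v" and a5: "cyc v w u" and a6: "{u,v,w} \<in> H"
  shows False
proof -
  have c: "cgh3 n H" using sat unfolding saturated_def by auto
  have lt: "u < n" "v < n" "w < n" using edge_lt[OF c a6] by auto
  have wx: "w \<noteq> x" using n1 a6 unfolding cov_def by auto
  have d: "u \<noteq> x" "x \<noteq> v" "u \<noteq> v" "w \<noteq> v" "w \<noteq> u" using a4 a5 unfolding cyc_def by auto
  have ncu: "\<not> cov H x u" "\<not> cov H x v" using n1 n2 by auto
  from kill3[OF sat x lt(1) lt(3) d(1)[symmetric] d(5)[symmetric] wx[symmetric] ncu(1)]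
  obtain w1 where k1: "({u,w,w1} \<in> H \<and> ((cyc u x w \<and> cyc w w1 u) \<or> (cyc w x u \<and> cyc u w1 w)))
           \<or> ({x,w,w1} \<in> H \<and> ((cyc x u w \<and> cyc w w1 x) \<or> (cyc w u x \<and> cyc x w1 w)))" by blast
  from kill3[OF sat x lt(2) lt(3) d(2) d(4)[symmetric] wx[symmetric] ncu(2)]
  obtain w2 where k2: "({v,w,w2} \<in> H \<and> ((cyc v x w \<and> cyc w w2 v) \<or> (cyc w x v \<and> cyc v w2 w)))
           \<or> ({x,w,w2} \<in> H \<and> ((cyc x v w \<and> cyc w w2 x) \<or> (cyc w v x \<and> cyc x w2 w)))" by blast
  have o1: "cyc u v w" "\<not> cyc w x u" "\<not> cyc x u w" "cyc w u x"
    using a4 a5 unfolding cyc_def by arith+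
  have o2: "\<not> cyc v x w" "cyc w u v" "cyc w x v" "cyc x v w" "\<not> cyc w v x"
    using a4 a5 unfolding cyc_def by arith+
  have h': "{u,w,v} \<in> H" "{w,v,u} \<in> H" using a6 by (auto simp: insert_commute)
  have A: "{x,w,w1} \<in> H \<and> cyc x w1 w"
  proof -
    { assume "{u,w,w1} \<in> H" "cyc w w1 u"
      then have False using nocross[OF sat h'(1)] o1 by blast }
    then show ?thesis using k1 o1 by blast
  qed
  have B: "{x,w,w2} \<in> H \<and> cyc w w2 x"
  proof -
    { assume "{v,w,w2} \<in> H" "cyc v w2 w"
      then have "{w,v,w2} \<in> H" by (simp add: insert_commute)
      then have False using nocross[OF sat h'(2)] o2 \<open>cyc v w2 w\<close> by blast }
    then show ?thesis using k2 o2 by blast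
  qed
  show False using nocross[OF sat] A B by blast
qed

lemma unc:
  assumes sat: "saturated n 4 D1 H" and "x < n" "y < n" "z < n" "x \<noteq> y" "y \<noteq> z" "x \<noteq> z"
    "\<not> cov H x y" "\<not> cov H x z"
  shows False
proof -
  have "{x,y,z} \<notin> H" using assms(8) unfolding cov_def by auto
  then obtain u v t w where eq: "{u,v,t} = {x,y,z}" and h: "{u,v,w} \<in> H" and c1: "cyc u t v" and c2: "cyc v w u"
    using kill[OF sat triple_in[OF assms(2-7)]] by blast
  have d: "u \<noteq> v" "u \<noteq> t" "v \<noteq> t" using c1 unfolding cyc_def by auto
  have m: "u \<in> {x,y,z}" "v \<in> {x,y,z}" "t \<in> {x,y,z}" using eq by blast+
  have "u \<noteq> x" "v \<noteq> x" using assms(8,9) h d m unfolding cov_def by auto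
  then have tx: "t = x" and "\<not> cov H x u" "\<not> cov H x v" using m d assms(8,9) by auto
  then show False using core[OF sat assms(2)] c1 c2 h by blast
qed


lemma card_offdiag: "card e = 3 \<Longrightarrow> card {(x,y). x \<in> e \<and> y \<in> e \<and> x \<noteq> y} \<le> 6"
proof -
  assume c: "card e = 3"
  then have f: "finite e" by (metis card.infinite zero_neq_numeral)
  have eq: "{(x,y). x \<in> e \<and> y \<in> e \<and> x \<noteq> y} = e \<times> e - (\<lambda>x. (x,x)) ` e" by auto
  have "card ((\<lambda>x. (x,x)) ` e) = 3" using c by (simp add: card_image inj_on_def)
  moreover have "card (e \<times> e) = 9" using c by (simp add: card_cartesian_product)
  moreover have "(\<lambda>x. (x,x)) ` e \<subseteq> e \<times> e" by auto
  ultimately show ?thesis unfolding eq using f by (simp add: card_Diff_subset)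
qed

lemma lower:
  assumes sat: "saturated n 4 D1 H"
  shows "n * (n - 2) \<le> 6 * card H"
proof -
  have c: "cgh3 n H" using sat unfolding saturated_def by auto
  have fT: "finite (triples n)" unfolding triples_def
    by (rule finite_subset[of _ "Pow {..<n}"]) auto
  have fH: "finite H" using c fT unfolding cgh3_def by (rule finite_subset)
  define N where "N x = {y. y < n \<and> y \<noteq> x \<and> cov H x y}" for x
  have fN: "finite (N x)" for x unfolding N_def by auto
  have cN: "n - 2 \<le> card (N x)" if x: "x < n" for x
  proof -
    define A where "A = {..<n} - {x}"
    have cA: "card A = n - 1" unfolding A_def using x by simp
    have "card (A - N x) \<le> Suc 0"
    proof (subst card_le_Suc0_iff_eq)
      show "finite (A - N x)" unfolding A_def by auto
      show "\<forall>a\<in>A - N x. \<forall>b\<in>A - N x. a = b"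
      proof (intro ballI, rule ccontr)
        fix a b assume a: "a \<in> A - N x" and b: "b \<in> A - N x" and ab: "a \<noteq> b"
        show False using unc[OF sat x, of a b] a b ab unfolding A_def N_def by auto
      qed
    qed
    moreover have "card A \<le> card (N x) + card (A - N x)"
    proof -
      have "A \<subseteq> N x \<union> (A - N x)" by auto
      then have "card A \<le> card (N x \<union> (A - N x))" by (rule card_mono[rotated]) (use fN A_def in auto)
      also have "\<dots> \<le> card (N x) + card (A - N x)" by (rule card_Un_le)
      finally show ?thesis .
    qed
    ultimately show ?thesis using cA by linarith
  qed
  define P where "P = Sigma {..<n} N"
  have "card P = (\<Sum>x<n. card (N x))" unfolding P_def by (rule card_SigmaI) (auto simp: fN)
  moreover have "n * (n - 2) \<le> (\<Sum>x<n. card (N x))"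
    using sum_bounded_below[of "{..<n}" "n - 2" "\<lambda>x. card (N x)"] cN by simp
  ultimately have lo: "n * (n - 2) \<le> card P" by simp
  define Q where "Q e = {(x,y). x \<in> e \<and> y \<in> e \<and> x \<noteq> y}" for e :: "nat set"
  have sub: "P \<subseteq> (\<Union>e\<in>H. Q e)" unfolding P_def N_def Q_def cov_def by auto
  have "card P \<le> card (\<Union>e\<in>H. Q e)"
  proof (rule card_mono[OF _ sub])
    show "finite (\<Union>e\<in>H. Q e)" using fH unfolding Q_def
      by (intro finite_UN_I) (auto intro: finite_subset[of _ "{..<n} \<times> {..<n}"] dest: edge_lt[OF c])
  qed
  also have "\<dots> \<le> (\<Sum>e\<in>H. card (Q e))" by (rule card_UN_le[OF fH])
  also have "\<dots> \<le> (\<Sum>e\<in>H. 6)"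
  proof (rule sum_mono)
    fix e assume "e \<in> H"
    then have "card e = 3" using c unfolding cgh3_def triples_def by auto
    then show "card (Q e) \<le> 6" unfolding Q_def by (rule card_offdiag)
  qed
  finally show ?thesis using lo by simp
qed



definition HA :: "nat \<Rightarrow> nat set set" where
  "HA n = {{a, Suc a, k} | a k. even a \<and> Suc a < k \<and> k < n}"

lemma HA_side:
  assumes "e \<in> HA n" "u \<in> e" "v \<in> e" "t \<in> e" "u < v" "t \<noteq> u" "t \<noteq> v"
  shows "(u < t \<and> t < v) \<longleftrightarrow> (even u \<and> v \<noteq> Suc u)"
proof -
  obtain a k where e: "e = {a, Suc a, k}" and a: "even a" "Suc a < k" "k < n"
    using assms(1) unfolding HA_def by blast
  show ?thesis using assms(2-7) a unfolding e by auto
qed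

lemma HA_free: "\<not> contains_copy n (HA n) 4 D1"
proof
  assume "contains_copy n (HA n) 4 D1"
  then obtain a b c d where e1: "{a,b,c} \<in> HA n" and e2: "{a,c,d} \<in> HA n"
    and c1: "cyc a b c" and c2: "cyc c d a" using decode by blast
  have dd: "a \<noteq> b" "b \<noteq> c" "a \<noteq> c" "c \<noteq> d" "a \<noteq> d" using c1 c2 unfolding cyc_def by auto
  show False
  proof (cases "a < c")
    case True
    have "a < b \<and> b < c" using c1 True unfolding cyc_def by auto
    moreover have "\<not> (a < d \<and> d < c)" using c2 True unfolding cyc_def by auto
    ultimately show False using HA_side[OF e1, of a c b] HA_side[OF e2, of a c d] True dd by auto
  next
    case False
    then have ca: "c < a" using dd by auto
    have "\<not> (c < b \<and> b < a)" using c1 ca unfolding cyc_def by auto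
    moreover have "c < d \<and> d < a" using c2 ca unfolding cyc_def by auto
    ultimately show False using HA_side[OF e1, of c a b] HA_side[OF e2, of c a d] ca dd by auto
  qed
qed

lemma sort3':
  fixes x y z :: nat
  assumes "x \<noteq> y" "y \<noteq> z" "x \<noteq> z"
  shows "\<exists>p q r. p < q \<and> q < r \<and> {x,y,z} = {p,q,r}"
proof -
  have "x < y \<or> y < x" "y < z \<or> z < y" "x < z \<or> z < x" using assms by auto
  then consider "x < y" "y < z" | "x < z" "z < y" | "y < x" "x < z" | "y < z" "z < x" | "z < x" "x < y" | "z < y" "y < x"
    by linarith
  then show ?thesis
  proof cases
    case 1 then show ?thesis by blast
  next
    case 2 then show ?thesis by (intro exI[of _ x] exI[of _ z] exI[of _ y]) auto
  next
    case 3 then show ?thesis by (intro exI[of _ y] exI[of _ x] exI[of _ z]) auto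
  next
    case 4 then show ?thesis by (intro exI[of _ y] exI[of _ z] exI[of _ x]) auto
  next
    case 5 then show ?thesis by (intro exI[of _ z] exI[of _ x] exI[of _ y]) auto
  next
    case 6 then show ?thesis by (intro exI[of _ z] exI[of _ y] exI[of _ x]) auto
  qed
qed

lemma sort3:
  assumes "card S = 3"
  shows "\<exists>p q r. p < q \<and> q < r \<and> S = {p,q,(r::nat)}"
proof -
  obtain x y z where "S = {x,y,z}" "x \<noteq> y" "y \<noteq> z" "x \<noteq> z" using assms by (metis card_3_iff)
  then show ?thesis using sort3' by metis
qed
lemma HA_cgh: "cgh3 n (HA n)"
  unfolding cgh3_def HA_def triples_def by auto

lemma HA_I: "even a \<Longrightarrow> Suc a < k \<Longrightarrow> k < n \<Longrightarrow> {a, Suc a, k} \<in> HA n"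
  unfolding HA_def by blast

lemma HA_sat: "saturated n 4 D1 (HA n)"
  unfolding saturated_def
proof (intro conjI ballI)
  show "cgh3 n (HA n)" by (rule HA_cgh)
  show "\<not> contains_copy n (HA n) 4 D1" by (rule HA_free)
  fix T assume T: "T \<in> triples n - HA n"
  then have "card T = 3" unfolding triples_def by auto
  then obtain p q r where pqr: "p < q" "q < r" "T = {p,q,r}" using sort3 by blast
  have rn: "r < n" using T pqr unfolding triples_def by auto
  have qn: "q < n" "p < n" using rn pqr by auto
  show "contains_copy n (insert T (HA n)) 4 D1"
  proof (cases "even p")
    case False
    define a where "a = p - 1"
    have a: "p = Suc a" "even a" unfolding a_def using False by presburger+
    have an: "a < n" using a qn by simp
    have "{a, Suc a, r} \<in> HA n" using a pqr rn by (intro HA_I) auto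
    then have e2: "{p,r,a} \<in> insert T (HA n)" using a by (simp add: insert_commute)
    have e1: "{p,q,r} \<in> insert T (HA n)" using pqr by simp
    have c1: "cyc p q r" using pqr unfolding cyc_def by simp
    have c2: "cyc r a p" using pqr a unfolding cyc_def by simp
    show ?thesis by (rule encode[OF qn(2) qn(1) rn an c1 c2 e1 e2])
  next
    case True
    have "q \<noteq> Suc p"
    proof
      assume "q = Suc p"
      then have "T \<in> HA n" using True pqr rn HA_I[of p r n] by simp
      then show False using T by auto
    qed
    then have sq: "Suc p < q" using pqr by auto
    have sn: "Suc p < n" using sq qn by simp
    have "{p, Suc p, q} \<in> HA n" using True sq qn by (intro HA_I) auto
    then have e2: "{q,p,Suc p} \<in> insert T (HA n)" by (simp add: insert_commute)
    have e1: "{q,r,p} \<in> insert T (HA n)" using pqr by (simp add: insert_commute)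
    have c1: "cyc q r p" using pqr unfolding cyc_def by simp
    have c2: "cyc p (Suc p) q" using sq unfolding cyc_def by simp
    show ?thesis by (rule encode[OF qn(1) rn qn(2) sn c1 c2 e1 e2])
  qed
qed

lemma sum_closed: "2 * (m::nat) \<le> (n::nat) \<Longrightarrow> (\<Sum>i<m. n - 2 * i) + m * m = m * n + m"
proof (induction m)
  case 0 then show ?case by simp
next
  case (Suc m)
  then have "2 * m \<le> n" by simp
  with Suc.IH have ih: "(\<Sum>i<m. n - 2 * i) + m * m = m * n + m" .
  have "(\<Sum>i<Suc m. n - 2 * i) + Suc m * Suc m = (\<Sum>i<m. n - 2 * i) + (n - 2 * m) + Suc m * Suc m" by simp
  also have "\<dots> = Suc m * n + Suc m" using ih Suc.prems by (simp add: algebra_simps)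
  finally show ?case .
qed

lemma HA_card: "card (HA n) \<le> (\<Sum>i<n div 2. n - 2 * i)"
proof -
  have sub: "HA n \<subseteq> (\<Union>i<n div 2. (\<lambda>k. {2*i, Suc (2*i), k}) ` {2*i..<n})"
  proof
    fix e assume "e \<in> HA n"
    then obtain a k where e: "e = {a, Suc a, k}" and a: "even a" "Suc a < k" "k < n"
      unfolding HA_def by blast
    have "a div 2 < n div 2" using a by presburger
    moreover have "a = 2 * (a div 2)" using a by simp
    ultimately show "e \<in> (\<Union>i<n div 2. (\<lambda>k. {2*i, Suc (2*i), k}) ` {2*i..<n})"
      using e a by (intro UN_I[of "a div 2"]) auto
  qed
  have "card (HA n) \<le> card (\<Union>i<n div 2. (\<lambda>k. {2*i, Suc (2*i), k}) ` {2*i..<n})"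
    by (rule card_mono[OF _ sub]) auto
  also have "\<dots> \<le> (\<Sum>i<n div 2. card ((\<lambda>k. {2*i, Suc (2*i), k}) ` {2*i..<n}))"
    by (rule card_UN_le) auto
  also have "\<dots> \<le> (\<Sum>i<n div 2. n - 2 * i)"
    by (rule sum_mono) (metis card_atLeastLessThan card_image_le finite_atLeastLessThan)
  finally show ?thesis .
qed

lemma HA_card_real: "real (card (HA n)) \<le> real n ^ 2 / 4 + real n / 2 + 1 / 4"
proof -
  define m where "m = n div 2"
  define S where "S = (\<Sum>i<m. n - 2 * i)"
  have "S + m * m = m * n + m" unfolding S_def by (rule sum_closed) (simp add: m_def)
  then have eq: "real S + real m * real m = real m * real n + real m" by (metis of_nat_add of_nat_mult)
  have sq: "(real n + 1 - 2 * real m)^2 = real n ^ 2 + 2 * real n + 1 - 4 * (real m * real n) - 4 * real m + 4 * (real m * real m)"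
    by (simp add: power2_eq_square algebra_simps)
  have "0 \<le> (real n + 1 - 2 * real m)^2" by simp
  then have "real S \<le> real n ^ 2 / 4 + real n / 2 + 1 / 4" using eq sq by linarith
  moreover have "card (HA n) \<le> S" using HA_card unfolding S_def m_def .
  ultimately show ?thesis by linarith
qed

theorem propositionA6:
  shows "\<exists>C::real. \<forall>\<^sub>F n in sequentially.
    real n ^ 2 / 6 - C * real n \<le> real (sat_cyc n 4 D1) \<and>
    real (sat_cyc n 4 D1) \<le> real n ^ 2 / 4 + C * real n"
proof (intro exI[of _ 1] eventually_mono[OF eventually_ge_at_top[of 2]])
  fix n :: nat assume n2: "2 \<le> n"
  define S where "S = {card H | H. saturated n 4 D1 H}"
  have fT: "finite (triples n)" unfolding triples_def
    by (rule finite_subset[of _ "Pow {..<n}"]) auto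
  have fS: "finite S"
  proof (rule finite_subset[of _ "card ` Pow (triples n)"])
    show "S \<subseteq> card ` Pow (triples n)" unfolding S_def saturated_def cgh3_def by auto
  qed (use fT in auto)
  have inS: "card (HA n) \<in> S" unfolding S_def using HA_sat by blast
  then have ne: "S \<noteq> {}" by auto
  have sc: "sat_cyc n 4 D1 = Min S" unfolding sat_cyc_def S_def ..
  have up: "sat_cyc n 4 D1 \<le> card (HA n)" unfolding sc using fS inS by simp
  have "Min S \<in> S" using fS ne by (rule Min_in)
  then obtain H0 where H0: "saturated n 4 D1 H0" "sat_cyc n 4 D1 = card H0" unfolding sc S_def by auto
  have lo: "n * (n - 2) \<le> 6 * card H0" using lower[OF H0(1)] .
  have "real n * (real n - 2) \<le> 6 * real (card H0)"
  proof -
    have "real (n * (n - 2)) \<le> real (6 * card H0)" using lo by (simp only: of_nat_le_iff)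
    then show ?thesis using n2 by (simp add: of_nat_diff)
  qed
  moreover have "real n ^ 2 = real n * real n" by (simp add: power2_eq_square)
  moreover have "real n \<ge> 2" using n2 by simp
  ultimately have "real n ^ 2 / 6 - 1 * real n \<le> real (sat_cyc n 4 D1)"
    unfolding H0(2) by (simp add: algebra_simps)
  moreover have "real (sat_cyc n 4 D1) \<le> real n ^ 2 / 4 + 1 * real n"
  proof -
    have "real (sat_cyc n 4 D1) \<le> real (card (HA n))" using up by simp
    then show ?thesis using HA_card_real[of n] \<open>real n \<ge> 2\<close> by linarith
  qed
  ultimately show "real n ^ 2 / 6 - 1 * real n \<le> real (sat_cyc n 4 D1) \<and>
    real (sat_cyc n 4 D1) \<le> real n ^ 2 / 4 + 1 * real n" by blast
qed

end
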